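(* Let $n \ge 2$, let $\lambda_1,\ldots,\lambda_n \in \mathbb{C}$, let $F$ be the $n$-by-$n$ discrete Fourier transform matrix, i.e. $f_{ij} = \omega^{(i-1)(j-1)}/\sqrt{n}$ with $\omega := \exp(-2\pi i/n)$, let $D = \operatorname{diag}(\lambda_1,\ldots,\lambda_n)$, and let $A = FDF^\ast$. Then for each $k \in \{1,\ldots,n\}$, the field of values $F(A_{(k)})$ is inscribed in the polygon $\partial \operatorname{co}(\lambda_1,\ldots,\lambda_n)$, and the points of tangency (the points where $F(A_{(k)})$ meets the sides of this polygon) occur at the midpoints of the sides of $\partial\operatorname{co}(\lambda_1,\ldots,\lambda_n)$.
   Context: For $B \in \mathsf{M}_m(\mathbb{C})$, the field of values is $F(B) = \{x^\ast B x : x \in \mathbb{C}^m,\ x^\ast x = 1\}$. $A_{(k)}$ denotes the $(n-1)$-by-$(n-1)$ principal submatrix of $A$ obtained by deleting its $k$th row and column. $\operatorname{co}$ denotes convex hull. Label the vertices of the convex polygon $\operatorname{co}(\lambda_1,\ldots,\lambda_n)$ consecutively along its boundary as $\mu_1,\ldots,\mu_d$, so that its sides are $\operatorname{co}(\mu_j,\mu_{j+1})$, $j=1,\ldots,d$, with $\mu_{d+1} := \mu_1$. A set $G$ is inscribed in the polygon if $G \cap \operatorname{co}(\mu_j,\mu_{j+1}) \neq \emptyset$ for all $j \in \{1,\ldots,d\}$. *)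

theory Defs
  imports "HOL-Analysis.Analysis"
begin

text \<open>Matrices are represented as functions nat => nat => complex, with an explicit
  size m; indices run over 0..m-1 (0-based, so the paper's index i corresponds to i-1).\<close>

definition field_of_values :: "nat \<Rightarrow> (nat \<Rightarrow> nat \<Rightarrow> complex) \<Rightarrow> complex set" where
  "field_of_values m B =
     {(\<Sum>i<m. \<Sum>j<m. cnj (x i) * B i j * x j) | x :: nat \<Rightarrow> complex.
        (\<Sum>i<m. (cmod (x i))\<^sup>2) = 1}"

definition dft_omega :: "nat \<Rightarrow> complex" where
  "dft_omega n = exp (- 2 * of_real pi * \<i> / of_nat n)"

definition dft_matrix :: "nat \<Rightarrow> nat \<Rightarrow> nat \<Rightarrow> complex" where
  "dft_matrix n i j = dft_omega n ^ (i * j) / of_real (sqrt (real n))"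

definition dft_conj_diag :: "nat \<Rightarrow> (nat \<Rightarrow> complex) \<Rightarrow> nat \<Rightarrow> nat \<Rightarrow> complex" where
  "dft_conj_diag n lam i j =
     (\<Sum>l<n. dft_matrix n i l * lam l * cnj (dft_matrix n j l))"

definition delete_rc :: "nat \<Rightarrow> (nat \<Rightarrow> nat \<Rightarrow> complex) \<Rightarrow> nat \<Rightarrow> nat \<Rightarrow> complex" where
  "delete_rc k B i j = B (if i < k then i else Suc i) (if j < k then j else Suc j)"

text \<open>co(a,b) is a side of the convex polygon P (a convex hull of finitely many points):
  a and b are vertices (extreme points) of P, the segment between them is a face of P,
  and a = b only in the degenerate case where P is a single point (d = 1).\<close>
definition polygon_side :: "complex set \<Rightarrow> complex \<Rightarrow> complex \<Rightarrow> bool" where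
  "polygon_side P a b \<longleftrightarrow>
     a extreme_point_of P \<and> b extreme_point_of P \<and> closed_segment a b face_of P \<and>
     (a = b \<longrightarrow> P = {a})"

end

theory Submission
  imports Defs
begin

lemma omega_pow: "dft_omega n ^ m = exp (of_nat m * (- 2 * of_real pi * \<i> / of_nat n))"
  unfolding dft_omega_def by (simp only: exp_of_nat_mult)

lemma cmod_omega_pow: "cmod (dft_omega n ^ m) = 1"
  unfolding omega_pow by (simp add: norm_exp_eq_Re)

lemma dft_sym: "dft_matrix n i j = dft_matrix n j i"
  unfolding dft_matrix_def by (simp add: mult.commute)

lemma cmod_dft: "n > 0 \<Longrightarrow> cmod (dft_matrix n i j) = 1 / sqrt (real n)"
  unfolding dft_matrix_def by (simp add: norm_divide cmod_omega_pow)

lemma orth_term: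
  "cnj (dft_omega n ^ (s*l)) * dft_omega n ^ (s*l') =
     exp (of_int (int l' - int l) * (- 2 * of_real pi * \<i> / of_nat n)) ^ s"
proof -
  have "cnj (dft_omega n ^ (s*l)) * dft_omega n ^ (s*l') =
     exp (- (of_nat (s*l) * (- 2 * of_real pi * \<i> / of_nat n)) + of_nat (s*l') * (- 2 * of_real pi * \<i> / of_nat n))"
    unfolding omega_pow exp_cnj exp_add by simp
  also have "\<dots> = exp (of_nat s * (of_int (int l' - int l) * (- 2 * of_real pi * \<i> / of_nat n)))"
    by (rule arg_cong[where f=exp]) (simp add: algebra_simps flip: add_divide_distrib)
  finally show ?thesis by (simp only: exp_of_nat_mult)
qed

lemma zeta_one:
  assumes "l < n" "l' < n"
  shows "exp (of_int (int l' - int l) * (- 2 * of_real pi * \<i> / of_nat n)) = 1 \<longleftrightarrow> l = l'"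
proof
  assume h: "exp (of_int (int l' - int l) * (- 2 * of_real pi * \<i> / of_nat n)) = 1"
  then obtain m :: int where m: "Im (of_int (int l' - int l) * (- 2 * of_real pi * \<i> / of_nat n)) = of_int (2*m) * pi"
    unfolding exp_eq_1 by blast
  have n0: "n > 0" using assms by simp
  have "- 2 * pi * real_of_int (int l' - int l) / real n = 2 * real_of_int m * pi"
    using m by (simp add: mult_ac)
  hence "pi * (2 * (- real_of_int (int l' - int l))) = pi * (2 * (real_of_int m * real n))"
    using n0 by (simp add: field_simps)
  hence "- real_of_int (int l' - int l) = real_of_int m * real n"
    by simp
  hence e: "- (int l' - int l) = m * int n"
    by (metis of_int_eq_iff of_int_minus of_int_mult of_int_of_nat_eq)
  show "l = l'"
  proof (cases "m = 0")
    case True then show ?thesis using e by simp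
  next
    case False
    hence "1 \<le> \<bar>m\<bar>" by linarith
    hence "\<bar>m * int n\<bar> \<ge> int n" using mult_right_mono[of 1 "\<bar>m\<bar>" "int n"] by (simp add: abs_mult)
    then show ?thesis using e assms by linarith
  qed
qed simp

lemma dft_orth:
  assumes "l < n" "l' < n"
  shows "(\<Sum>s<n. cnj (dft_matrix n s l) * dft_matrix n s l') = (if l = l' then 1 else 0)"
proof -
  define z where "z = exp (of_int (int l' - int l) * (- 2 * of_real pi * \<i> / of_nat n))"
  have n0: "n > 0" using assms by simp
  have S: "(\<Sum>s<n. cnj (dft_matrix n s l) * dft_matrix n s l') = (\<Sum>s<n. z ^ s) / of_nat n"
  proof -
    have "cnj (dft_matrix n s l) * dft_matrix n s l' = z^s / of_nat n" for s
    proof -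
      have sq: "complex_of_real (sqrt (real n)) * complex_of_real (sqrt (real n)) = of_nat n"
        by (simp flip: of_real_mult)
      have "cnj (dft_matrix n s l) * dft_matrix n s l' = cnj (dft_omega n ^ (s*l)) * dft_omega n ^ (s*l')
         / (complex_of_real (sqrt (real n)) * complex_of_real (sqrt (real n)))"
        unfolding dft_matrix_def by (simp only: complex_cnj_divide complex_cnj_complex_of_real) simp
      then show ?thesis unfolding sq z_def orth_term .
    qed
    then show ?thesis by (simp add: sum_divide_distrib)
  qed
  have zn: "z ^ n = 1"
  proof -
    have "z ^ n = exp (of_nat n * (of_int (int l' - int l) * (- 2 * of_real pi * \<i> / of_nat n)))"
      unfolding z_def exp_of_nat_mult ..
    also have "\<dots> = exp ((2 * complex_of_int (int l - int l') * complex_of_real pi) * \<i>)"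
      using n0 by (intro arg_cong[where f=exp]) (simp add: field_simps)
    also have "\<dots> = 1" using exp_integer_2pi[of "real_of_int (int l - int l')"] by simp
    finally show ?thesis .
  qed
  have z1: "z = 1 \<longleftrightarrow> l = l'" using zeta_one[OF assms] unfolding z_def .
  show ?thesis unfolding S sum_gp_strict using zn z1 n0 by auto
qed

lemma dft_orth2:
  assumes "r < n" "s < n"
  shows "(\<Sum>l<n. dft_matrix n r l * cnj (dft_matrix n s l)) = (if r = s then 1 else 0)"
proof -
  have "(\<Sum>l<n. dft_matrix n r l * cnj (dft_matrix n s l)) = cnj (\<Sum>l<n. cnj (dft_matrix n l r) * dft_matrix n l s)"
    by (simp add: dft_sym[of n r] dft_sym[of n s])
  then show ?thesis using dft_orth[OF assms] by simp
qed

definition FA :: "nat \<Rightarrow> (nat \<Rightarrow> complex) \<Rightarrow> nat \<Rightarrow> complex" where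
  "FA n y l = (\<Sum>s<n. cnj (dft_matrix n s l) * y s)"

lemma delta_sum:
  assumes "r < (n::nat)"
  shows "(\<Sum>s<n. (if r = s then 1 else 0) * (f s :: complex)) = f r"
proof -
  have "\<And>s. (if r = s then 1 else 0) * f s = (if r = s then f r else 0)" by simp
  then show ?thesis using assms by (simp add: sum.delta)
qed

lemma inv_J:
  assumes "r < n"
  shows "(\<Sum>l<n. dft_matrix n r l * FA n y l) = y r"
proof -
  have "(\<Sum>l<n. dft_matrix n r l * FA n y l) = (\<Sum>l<n. \<Sum>s<n. dft_matrix n r l * cnj (dft_matrix n s l) * y s)"
    unfolding FA_def by (simp add: sum_distrib_left mult.assoc)
  also have "\<dots> = (\<Sum>s<n. (\<Sum>l<n. dft_matrix n r l * cnj (dft_matrix n s l)) * y s)"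
    by (subst sum.swap) (simp add: sum_distrib_right)
  also have "\<dots> = (\<Sum>s<n. (if r = s then 1 else 0) * y s)"
    by (rule sum.cong) (simp_all add: dft_orth2[OF assms])
  also have "\<dots> = y r" by (rule delta_sum[OF assms])
  finally show ?thesis .
qed

lemma inv_I:
  assumes "l < n"
  shows "FA n (\<lambda>s. \<Sum>l'<n. dft_matrix n s l' * z l') l = z l"
proof -
  have "FA n (\<lambda>s. \<Sum>l'<n. dft_matrix n s l' * z l') l = (\<Sum>s<n. \<Sum>l'<n. cnj (dft_matrix n s l) * dft_matrix n s l' * z l')"
    unfolding FA_def by (simp add: sum_distrib_left mult.assoc)
  also have "\<dots> = (\<Sum>l'<n. (\<Sum>s<n. cnj (dft_matrix n s l) * dft_matrix n s l') * z l')"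
    by (subst sum.swap) (simp add: sum_distrib_right)
  also have "\<dots> = (\<Sum>l'<n. (if l = l' then 1 else 0) * z l')"
    by (rule sum.cong) (simp_all add: dft_orth[OF assms])
  also have "\<dots> = z l" by (rule delta_sum[OF assms])
  finally show ?thesis .
qed

lemma parseval:
  "(\<Sum>r<n. (cmod (y r))\<^sup>2) = (\<Sum>l<n. (cmod (FA n y l))\<^sup>2)"
proof -
  have "complex_of_real (\<Sum>l<n. (cmod (FA n y l))\<^sup>2) = (\<Sum>l<n. cnj (FA n y l) * FA n y l)"
    by (simp only: complex_norm_square of_real_sum mult.commute)
  also have "\<dots> = (\<Sum>l<n. \<Sum>r<n. \<Sum>s<n. cnj (y r) * (dft_matrix n r l * cnj (dft_matrix n s l)) * y s)"
    unfolding FA_def by (simp add: sum_distrib_left sum_distrib_right mult_ac)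
  also have "\<dots> = (\<Sum>r<n. \<Sum>l<n. \<Sum>s<n. cnj (y r) * (dft_matrix n r l * cnj (dft_matrix n s l)) * y s)"
    by (rule sum.swap)
  also have "\<dots> = (\<Sum>r<n. \<Sum>s<n. \<Sum>l<n. cnj (y r) * (dft_matrix n r l * cnj (dft_matrix n s l)) * y s)"
    by (rule sum.cong[OF refl], rule sum.swap)
  also have "\<dots> = (\<Sum>r<n. \<Sum>s<n. cnj (y r) * (\<Sum>l<n. dft_matrix n r l * cnj (dft_matrix n s l)) * y s)"
    by (simp add: sum_distrib_left sum_distrib_right)
  also have "\<dots> = (\<Sum>r<n. cnj (y r) * y r)"
  proof (rule sum.cong)
    fix r assume r: "r \<in> {..<n}"
    have "(\<Sum>s<n. cnj (y r) * (\<Sum>l<n. dft_matrix n r l * cnj (dft_matrix n s l)) * y s)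
        = (\<Sum>s<n. (if r = s then 1 else 0) * (cnj (y r) * y s))"
      by (rule sum.cong) (use r in \<open>simp_all add: dft_orth2\<close>)
    also have "\<dots> = cnj (y r) * y r" using r by (intro delta_sum) simp
    finally show "(\<Sum>s<n. cnj (y r) * (\<Sum>l<n. dft_matrix n r l * cnj (dft_matrix n s l)) * y s) = cnj (y r) * y r" .
  qed simp
  also have "\<dots> = complex_of_real (\<Sum>r<n. (cmod (y r))\<^sup>2)"
    by (simp only: complex_norm_square of_real_sum mult.commute)
  finally show ?thesis by (simp only: of_real_eq_iff)
qed

lemma quad:
  "(\<Sum>r<n. \<Sum>s<n. cnj (y r) * dft_conj_diag n lam r s * y s) = (\<Sum>l<n. lam l * complex_of_real ((cmod (FA n y l))\<^sup>2))"
proof -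
  have "(\<Sum>l<n. lam l * complex_of_real ((cmod (FA n y l))\<^sup>2)) = (\<Sum>l<n. lam l * (cnj (FA n y l) * FA n y l))"
    by (simp only: complex_norm_square of_real_sum mult.commute)
  also have "\<dots> = (\<Sum>l<n. \<Sum>r<n. \<Sum>s<n. cnj (y r) * (dft_matrix n r l * lam l * cnj (dft_matrix n s l)) * y s)"
    unfolding FA_def by (simp add: sum_distrib_left sum_distrib_right mult_ac)
  also have "\<dots> = (\<Sum>r<n. \<Sum>l<n. \<Sum>s<n. cnj (y r) * (dft_matrix n r l * lam l * cnj (dft_matrix n s l)) * y s)"
    by (rule sum.swap)
  also have "\<dots> = (\<Sum>r<n. \<Sum>s<n. \<Sum>l<n. cnj (y r) * (dft_matrix n r l * lam l * cnj (dft_matrix n s l)) * y s)"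
    by (rule sum.cong[OF refl], rule sum.swap)
  also have "\<dots> = (\<Sum>r<n. \<Sum>s<n. cnj (y r) * dft_conj_diag n lam r s * y s)"
    unfolding dft_conj_diag_def by (simp add: sum_distrib_left sum_distrib_right)
  finally show ?thesis by simp
qed

lemma sum_del:
  assumes "k < n" "h k = 0"
  shows "(\<Sum>i<n-1. h (if i < k then i else Suc i)) = (\<Sum>r<n. (h r :: 'a::comm_monoid_add))"
proof -
  have bij: "bij_betw (\<lambda>i. if i < k then i else Suc i) {..<n-1} ({..<n} - {k})"
  proof (rule bij_betw_byWitness[where f'="\<lambda>r. if r < k then r else r - 1"])
  qed (use assms in auto)
  have "(\<Sum>i<n-1. h (if i < k then i else Suc i)) = (\<Sum>r\<in>{..<n} - {k}. h r)"
    using sum.reindex_bij_betw[OF bij, of h] by simp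
  also have "\<dots> = (\<Sum>r<n. h r)"
    using assms by (simp add: sum.remove[of "{..<n}" k])
  finally show ?thesis .
qed

lemma fov_char:
  assumes "k < n"
  shows "field_of_values (n - 1) (delete_rc k (dft_conj_diag n lam)) =
    {(\<Sum>l<n. lam l * complex_of_real ((cmod (FA n y l))\<^sup>2)) | y. y k = 0 \<and> (\<Sum>r<n. (cmod (y r))\<^sup>2) = 1}"
proof -
  define sg where "sg = (\<lambda>i::nat. if i < k then i else Suc i)"
  have key: "(\<Sum>i<n-1. \<Sum>j<n-1. cnj (y (sg i)) * delete_rc k (dft_conj_diag n lam) i j * y (sg j))
       = (\<Sum>l<n. lam l * complex_of_real ((cmod (FA n y l))\<^sup>2)) \<and>
     (\<Sum>i<n-1. (cmod (y (sg i)))\<^sup>2) = (\<Sum>r<n. (cmod (y r))\<^sup>2)" if yk: "y k = 0" for y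
  proof
    have "(\<Sum>i<n-1. \<Sum>j<n-1. cnj (y (sg i)) * delete_rc k (dft_conj_diag n lam) i j * y (sg j))
       = (\<Sum>i<n-1. \<Sum>s<n. cnj (y (sg i)) * dft_conj_diag n lam (sg i) s * y s)"
      unfolding delete_rc_def sg_def
      by (rule sum.cong[OF refl], rule sum_del[OF assms, of "\<lambda>s. _ * _ s * y s"]) (simp add: yk)
    also have "\<dots> = (\<Sum>r<n. \<Sum>s<n. cnj (y r) * dft_conj_diag n lam r s * y s)"
      unfolding sg_def by (rule sum_del[OF assms, of "\<lambda>r. \<Sum>s<n. cnj (y r) * _ r s * y s"]) (simp add: yk)
    finally show "(\<Sum>i<n-1. \<Sum>j<n-1. cnj (y (sg i)) * delete_rc k (dft_conj_diag n lam) i j * y (sg j))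
       = (\<Sum>l<n. lam l * complex_of_real ((cmod (FA n y l))\<^sup>2))" by (simp only: quad)
    show "(\<Sum>i<n-1. (cmod (y (sg i)))\<^sup>2) = (\<Sum>r<n. (cmod (y r))\<^sup>2)"
      unfolding sg_def by (rule sum_del[OF assms, of "\<lambda>r. (cmod (y r))\<^sup>2"]) (simp add: yk)
  qed
  show ?thesis
  proof (rule set_eqI, rule iffI)
    fix w assume "w \<in> field_of_values (n - 1) (delete_rc k (dft_conj_diag n lam))"
    then obtain x where x: "w = (\<Sum>i<n-1. \<Sum>j<n-1. cnj (x i) * delete_rc k (dft_conj_diag n lam) i j * x j)"
      "(\<Sum>i<n-1. (cmod (x i))\<^sup>2) = 1"
      unfolding field_of_values_def by auto
    define y where "y = (\<lambda>r. if r = k then 0 else x (if r < k then r else r - 1))"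
    have yx: "y (sg i) = x i" for i unfolding y_def sg_def by auto
    have yk: "y k = 0" unfolding y_def by simp
    show "w \<in> {(\<Sum>l<n. lam l * complex_of_real ((cmod (FA n y l))\<^sup>2)) | y. y k = 0 \<and> (\<Sum>r<n. (cmod (y r))\<^sup>2) = 1}"
      using key[of y, OF yk] x yk unfolding yx by auto
  next
    fix w assume "w \<in> {(\<Sum>l<n. lam l * complex_of_real ((cmod (FA n y l))\<^sup>2)) | y. y k = 0 \<and> (\<Sum>r<n. (cmod (y r))\<^sup>2) = 1}"
    then obtain y where y: "w = (\<Sum>l<n. lam l * complex_of_real ((cmod (FA n y l))\<^sup>2))" "y k = 0" "(\<Sum>r<n. (cmod (y r))\<^sup>2) = 1"
      by auto
    show "w \<in> field_of_values (n - 1) (delete_rc k (dft_conj_diag n lam))"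
      unfolding field_of_values_def using key[of y, OF y(2)] y by (intro CollectI exI[of _ "\<lambda>i. y (sg i)"]) auto
  qed
qed

lemma sum_two:
  assumes "i < (n::nat)" "j < n" "i \<noteq> j" "\<And>l. l < n \<Longrightarrow> l \<noteq> i \<Longrightarrow> l \<noteq> j \<Longrightarrow> f l = 0"
  shows "(\<Sum>l<n. (f l :: 'a::comm_monoid_add)) = f i + f j"
proof -
  have "(\<Sum>l\<in>{i,j}. f l) = (\<Sum>l<n. f l)"
    by (rule sum.mono_neutral_left[OF finite_lessThan]) (use assms in auto)
  then show ?thesis using assms(3) by simp
qed

lemma face_weights:
  fixes p :: "nat \<Rightarrow> real" and v :: "nat \<Rightarrow> 'a::real_vector"
  assumes fin: "finite I" and pos: "\<And>l. l \<in> I \<Longrightarrow> p l \<ge> 0" and s1: "(\<Sum>l\<in>I. p l) = 1"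
    and vC: "\<And>l. l \<in> I \<Longrightarrow> v l \<in> C" and cvx: "convex C" and face: "T face_of C"
    and wT: "(\<Sum>l\<in>I. p l *\<^sub>R v l) \<in> T" and l0: "l0 \<in> I" "p l0 > 0"
  shows "v l0 \<in> T"
proof -
  define q where "q = p l0"
  define w where "w = (\<Sum>l\<in>I. p l *\<^sub>R v l)"
  have sp: "(\<Sum>l\<in>I - {l0}. p l) = 1 - q"
    using sum.remove[OF fin l0(1), of p] s1 q_def by simp
  have wsp: "w = q *\<^sub>R v l0 + (\<Sum>l\<in>I - {l0}. p l *\<^sub>R v l)"
    using sum.remove[OF fin l0(1), of "\<lambda>l. p l *\<^sub>R v l"] w_def q_def by simp
  have q1: "q \<le> 1"
    using sp sum_nonneg[of "I - {l0}" p] pos by force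
  show ?thesis
  proof (cases "q = 1")
    case True
    then have "\<forall>l\<in>I - {l0}. p l = 0"
      using sp sum_nonneg_eq_0_iff[of "I - {l0}" p] fin pos by auto
    then have "(\<Sum>l\<in>I - {l0}. p l *\<^sub>R v l) = 0" by simp
    then have "w = v l0" using wsp True by simp
    then show ?thesis using wT w_def by simp
  next
    case False
    then have q1': "q < 1" using q1 by simp
    define u where "u = (\<Sum>l\<in>I - {l0}. (p l / (1 - q)) *\<^sub>R v l)"
    have uC: "u \<in> C" unfolding u_def
    proof (rule convex_sum)
      show "(\<Sum>i\<in>I - {l0}. p i / (1 - q)) = 1" using sp q1' by (simp flip: sum_divide_distrib)
    qed (use fin cvx pos vC q1' in auto)
    have "(1 - q) *\<^sub>R u = (\<Sum>l\<in>I - {l0}. p l *\<^sub>R v l)"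
      unfolding u_def scaleR_sum_right using q1' by (intro sum.cong) auto
    then have wq: "w = (1 - (1 - q)) *\<^sub>R v l0 + (1 - q) *\<^sub>R u" using wsp by simp
    show ?thesis
    proof (cases "v l0 = u")
      case True
      then have "w = v l0" using wq by (simp add: algebra_simps)
      then show ?thesis using wT w_def by simp
    next
      case False
      have "w \<in> open_segment (v l0) u"
        unfolding in_segment using False q1' l0(2) q_def wq by (intro conjI exI[of _ "1 - q"]) auto
      then show ?thesis using face_ofD[OF face _ vC[OF l0(1)] uC] wT w_def by blast
    qed
  qed
qed

lemma dft_nz: "n > 0 \<Longrightarrow> dft_matrix n i j \<noteq> 0"
  using cmod_dft[of n i j] by auto

lemma pair_mid:
  assumes "k < n" "i < n" "j < n" "i \<noteq> j"
  shows "(lam i + lam j) / 2 \<in> field_of_values (n - 1) (delete_rc k (dft_conj_diag n lam))"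
proof -
  have n0: "n > 0" using assms by simp
  define c where "c = - dft_matrix n k i / dft_matrix n k j"
  have c1: "cmod c = 1" unfolding c_def using cmod_dft[OF n0] n0 by (simp add: norm_divide)
  define r2 where "r2 = complex_of_real (sqrt 2)"
  define z where "z = (\<lambda>l. (if l = i then 1 / r2 else 0) + (if l = j then c / r2 else 0))"
  define y where "y = (\<lambda>s. \<Sum>l<n. dft_matrix n s l * z l)"
  have FAz: "FA n y l = z l" if "l < n" for l unfolding y_def by (rule inv_I[OF that])
  have zout: "z l = 0" if "l \<noteq> i" "l \<noteq> j" for l unfolding z_def using that by simp
  have yk: "y k = 0"
  proof -
    have "y k = dft_matrix n k i * z i + dft_matrix n k j * z j"
      unfolding y_def by (rule sum_two[OF assms(2-4)]) (simp add: zout)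
    also have "\<dots> = (dft_matrix n k i + dft_matrix n k j * c) / r2"
      unfolding z_def using assms(4) by (simp add: algebra_simps add_divide_distrib)
    also have "\<dots> = 0" unfolding c_def using dft_nz[OF n0, of k j] by simp
    finally show ?thesis .
  qed
  have r2sq: "(cmod (1 / r2))\<^sup>2 = 1/2" unfolding r2_def by (simp add: norm_divide power_divide)
  have r2sq': "(cmod (c / r2))\<^sup>2 = 1/2" unfolding r2_def using c1 by (simp add: norm_divide power_divide)
  have zi: "z i = 1 / r2" and zj: "z j = c / r2" unfolding z_def using assms(4) by auto
  have norm1: "(\<Sum>r<n. (cmod (y r))\<^sup>2) = 1"
  proof -
    have "(\<Sum>r<n. (cmod (y r))\<^sup>2) = (\<Sum>l<n. (cmod (FA n y l))\<^sup>2)" by (rule parseval)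
    also have "\<dots> = (cmod (FA n y i))\<^sup>2 + (cmod (FA n y j))\<^sup>2"
      by (rule sum_two[OF assms(2-4)]) (simp add: FAz zout)
    also have "\<dots> = 1" using FAz assms zi zj r2sq r2sq' by simp
    finally show ?thesis .
  qed
  have val: "(\<Sum>l<n. lam l * complex_of_real ((cmod (FA n y l))\<^sup>2)) = (lam i + lam j) / 2"
  proof -
    have "(\<Sum>l<n. lam l * complex_of_real ((cmod (FA n y l))\<^sup>2)) =
       lam i * complex_of_real ((cmod (FA n y i))\<^sup>2) + lam j * complex_of_real ((cmod (FA n y j))\<^sup>2)"
      by (rule sum_two[OF assms(2-4)]) (simp add: FAz zout)
    also have "\<dots> = (lam i + lam j) / 2"
    proof -
      have "complex_of_real ((cmod (FA n y i))\<^sup>2) = 1/2" "complex_of_real ((cmod (FA n y j))\<^sup>2) = 1/2"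
        unfolding FAz[OF assms(2)] FAz[OF assms(3)] zi zj r2sq r2sq' by simp_all
      then show ?thesis by (simp add: field_simps)
    qed
    finally show ?thesis .
  qed
  show ?thesis unfolding fov_char[OF assms(1)] using yk norm1 val[symmetric] by (intro CollectI exI[of _ y]) simp
qed

lemma mid_eq: "midpoint a b = (a + b) / (2::complex)"
  by (simp add: midpoint_def scaleR_conv_of_real field_simps)

lemma seg_only_mid:
  assumes kn: "k < n" and side: "polygon_side (convex hull (lam ` {..<n})) a b"
    and card2: "card {i. i < n \<and> lam i \<in> closed_segment a b} = 2"
    and wF: "w \<in> field_of_values (n - 1) (delete_rc k (dft_conj_diag n lam))"
    and wS: "w \<in> closed_segment a b"
  shows "w = midpoint a b"
proof -
  have n0: "n > 0" using kn by simp
  obtain y where yk: "y k = 0" and yn: "(\<Sum>r<n. (cmod (y r))\<^sup>2) = 1"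
    and w: "w = (\<Sum>l<n. lam l * complex_of_real ((cmod (FA n y l))\<^sup>2))"
    using wF unfolding fov_char[OF kn] mem_Collect_eq by auto
  define p where "p = (\<lambda>l. (cmod (FA n y l))\<^sup>2)"
  have ps: "(\<Sum>l<n. p l) = 1" unfolding p_def using yn parseval[where y=y and n=n] by simp
  have face: "closed_segment a b face_of convex hull (lam ` {..<n})"
    using side unfolding polygon_side_def by blast
  have wsum: "(\<Sum>l<n. p l *\<^sub>R lam l) \<in> closed_segment a b"
    using wS w unfolding p_def by (simp add: scaleR_conv_of_real mult.commute)
  have inseg: "lam l \<in> closed_segment a b" if "l < n" "p l > 0" for l
    by (rule face_weights[OF finite_lessThan _ ps _ convex_convex_hull face wsum])
       (use that in \<open>auto simp: p_def hull_inc\<close>)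
  obtain i j where ij: "{i. i < n \<and> lam i \<in> closed_segment a b} = {i, j}" "i \<noteq> j"
    using card2 card_2_iff by metis
  have i: "i < n" "lam i \<in> closed_segment a b" and j: "j < n" "lam j \<in> closed_segment a b"
    using ij(1) by blast+
  have p0: "p l = 0" if "l < n" "l \<noteq> i" "l \<noteq> j" for l
  proof -
    have "lam l \<notin> closed_segment a b" using ij(1) that by blast
    then show ?thesis using inseg[OF that(1)] p_def by (metis less_eq_real_def zero_le_power2)
  qed
  have FA0: "FA n y l = 0" if "l < n" "l \<noteq> i" "l \<noteq> j" for l
    using p0[OF that] unfolding p_def by simp
  have "0 = dft_matrix n k i * FA n y i + dft_matrix n k j * FA n y j"
    using yk inv_J[OF kn, of y] sum_two[OF i(1) j(1) ij(2), of "\<lambda>l. dft_matrix n k l * FA n y l"] FA0 by simp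
  then have "cmod (dft_matrix n k i * FA n y i) = cmod (dft_matrix n k j * FA n y j)"
    by (metis add.inverse_unique norm_minus_cancel)
  then have "cmod (FA n y i) = cmod (FA n y j)"
    using cmod_dft[OF n0] n0 by (simp add: norm_mult)
  then have pij: "p i = p j" unfolding p_def by simp
  have "p i + p j = 1" using ps sum_two[OF i(1) j(1) ij(2), of p] p0 by simp
  then have ph: "p i = 1/2" "p j = 1/2" using pij by simp_all
  have wij: "w = (lam i + lam j) / 2"
  proof -
    have "w = lam i * complex_of_real (p i) + lam j * complex_of_real (p j)"
      unfolding w using sum_two[OF i(1) j(1) ij(2), of "\<lambda>l. lam l * complex_of_real (p l)"] p0 p_def by simp
    then show ?thesis using ph by (simp add: field_simps)
  qed
  have ext: "a \<in> lam ` {..<n}" "b \<in> lam ` {..<n}"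
    using side extreme_point_of_convex_hull unfolding polygon_side_def by blast+
  have ab: "a = lam i \<or> a = lam j" "b = lam i \<or> b = lam j"
  proof -
    have "x = lam i \<or> x = lam j" if x1: "x \<in> lam ` {..<n}" and x2: "x \<in> closed_segment a b" for x
    proof -
      obtain l where l: "l < n" "x = lam l" using x1 by blast
      then have "l \<in> {i. i < n \<and> lam i \<in> closed_segment a b}" using x2 by simp
      then have "l = i \<or> l = j" unfolding ij(1) by simp
      then show ?thesis using l by auto
    qed
    then show "a = lam i \<or> a = lam j" "b = lam i \<or> b = lam j" using ext by auto
  qed
  show ?thesis
  proof (cases "a = b")
    case True
    then have "lam i = a" "lam j = a" using i(2) j(2) by auto
    then show ?thesis using wij True by (simp add: mid_eq)
  next
    case False
    then have "(a = lam i \<and> b = lam j) \<or> (a = lam j \<and> b = lam i)" using ab by blast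
    then show ?thesis using wij by (auto simp: mid_eq add.commute)
  qed
qed

theorem mainTheorem4:
  fixes n k :: nat and lam :: "nat \<Rightarrow> complex"
  assumes "n \<ge> 2" and "k < n"
  shows "\<forall>a b. polygon_side (convex hull (lam ` {..<n})) a b \<longrightarrow>
           field_of_values (n - 1) (delete_rc k (dft_conj_diag n lam)) \<inter> closed_segment a b \<noteq> {} \<and>
           midpoint a b \<in> field_of_values (n - 1) (delete_rc k (dft_conj_diag n lam)) \<and>
           (card {i. i < n \<and> lam i \<in> closed_segment a b} = 2 \<longrightarrow>
              field_of_values (n - 1) (delete_rc k (dft_conj_diag n lam)) \<inter> closed_segment a b
                = {midpoint a b})"
proof (intro allI impI)
  fix a b assume side: "polygon_side (convex hull (lam ` {..<n})) a b"
  have ext: "a \<in> lam ` {..<n}" "b \<in> lam ` {..<n}"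
    using side extreme_point_of_convex_hull unfolding polygon_side_def by blast+
  obtain i where i: "i < n" "lam i = a" using ext by blast
  obtain j where j: "j < n" "lam j = b" "i \<noteq> j"
  proof (cases "a = b")
    case True
    define j where "j = (if i = 0 then 1 else (0::nat))"
    have "j < n" "j \<noteq> i" unfolding j_def using assms(1) i(1) by auto
    moreover have "lam j = b"
    proof -
      have "lam j \<in> convex hull (lam ` {..<n})" using \<open>j < n\<close> by (simp add: hull_inc)
      moreover have "convex hull (lam ` {..<n}) = {a}" using side True unfolding polygon_side_def by (elim conjE) simp
      ultimately show ?thesis using True by simp
    qed
    ultimately show ?thesis using that by blast
  next
    case False
    obtain j where "j < n" "lam j = b" using ext by blast
    moreover have "i \<noteq> j" using False i \<open>lam j = b\<close> by auto
    ultimately show ?thesis using that by blast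
  qed
  have mid: "midpoint a b \<in> field_of_values (n - 1) (delete_rc k (dft_conj_diag n lam))"
    using pair_mid[OF assms(2) i(1) j(1) j(3), of lam] i j by (simp add: mid_eq)
  have midS: "midpoint a b \<in> closed_segment a b" by simp
  show "field_of_values (n - 1) (delete_rc k (dft_conj_diag n lam)) \<inter> closed_segment a b \<noteq> {} \<and>
           midpoint a b \<in> field_of_values (n - 1) (delete_rc k (dft_conj_diag n lam)) \<and>
           (card {i. i < n \<and> lam i \<in> closed_segment a b} = 2 \<longrightarrow>
              field_of_values (n - 1) (delete_rc k (dft_conj_diag n lam)) \<inter> closed_segment a b
                = {midpoint a b})"
  proof (intro conjI impI)
    show "field_of_values (n - 1) (delete_rc k (dft_conj_diag n lam)) \<inter> closed_segment a b \<noteq> {}"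
      using mid midS by blast
    show "midpoint a b \<in> field_of_values (n - 1) (delete_rc k (dft_conj_diag n lam))" by (rule mid)
    assume c2: "card {i. i < n \<and> lam i \<in> closed_segment a b} = 2"
    show "field_of_values (n - 1) (delete_rc k (dft_conj_diag n lam)) \<inter> closed_segment a b = {midpoint a b}"
    proof (rule set_eqI, rule iffI)
      fix w assume "w \<in> field_of_values (n - 1) (delete_rc k (dft_conj_diag n lam)) \<inter> closed_segment a b"
      then have "w = midpoint a b" using seg_only_mid[OF assms(2) side c2] by blast
      then show "w \<in> {midpoint a b}" by simp
    next
      fix w assume "w \<in> {midpoint a b}"
      then show "w \<in> field_of_values (n - 1) (delete_rc k (dft_conj_diag n lam)) \<inter> closed_segment a b"
        using mid midS by simp
    qed
  qed
qed

end
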